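(* Let $n\ge 3$. For a generic framed $n$-gon $(B_1,\dots,B_n;u_1,\dots,u_n)$ and each $i$, let $C_i$ be the unique circle passing through $B_{i-1}$ and $B_i$ and tangent to $u_{i-1}$ at $B_{i-1}$ and to $u_i$ at $B_i$, and orient the chain $(C_1,\dots,C_n)$ by the rotation of the circles given by the framing vectors. This defines a map $\mathcal F_n^\circ\to\mathcal C_n^\circ$ from generic framed $n$-gons to generic oriented chains of $n$ circles, and this map is a bijection.
   Context: Indices are mod $n$. For nonzero plane vectors $u,v$, $\angle(u,v)\in\mathbb{R}/2\pi\mathbb{Z}$ is the counterclockwise angle from $u$ to $v$. A framed $n$-gon is a tuple $(B_1,\dots,B_n;u_1,\dots,u_n)$ of points with $B_i\neq B_{i+1}$ and unit vectors $u_i$ with $\angle(u_i,B_{i+1}-B_i)=\angle(B_{i+1}-B_i,u_{i+1})$ for all $i$; $(u_i)$ and $(-u_i)$ are identified. A framed polygon is non-generic if for some $i$ the vectors $u_{i-1},u_i,u_{i+1}$ are tangent to the circle through $B_{i-1},B_i,B_{i+1}$; otherwise generic; $\mathcal F_n^\circ$ is the set of generic framed $n$-gons. An oriented chain of $n$ circles is a collection of circles $C_1,\dots,C_n$ with $C_i$ tangent to $C_{i+1}$ and $C_i\ne C_{i+1}$, with signs assigned to the circles so that externally tangent consecutive circles have opposite signs and internally tangent ones have equal signs, up to simultaneous change of all signs (equivalently, the circles can be rotated consistently like linked gears, circles of the same sign rotating in the same sense). A chain is non-generic if for some $i$ the tangency point of $C_{i-1}$ with $C_i$ coincides with the tangency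 point of $C_i$ with $C_{i+1}$; otherwise generic; $\mathcal C_n^\circ$ is the set of generic oriented chains. *)

theory Defs
  imports "HOL-Analysis.Analysis"
begin

text \<open>The plane is the complex plane. Polygons and chains are lists of length n,
  indices taken mod n.\<close>

definition nxt :: "nat \<Rightarrow> nat \<Rightarrow> nat" where
  "nxt n i = (i + 1) mod n"

definition prv :: "nat \<Rightarrow> nat \<Rightarrow> nat" where
  "prv n i = (i + n - 1) mod n"

text \<open>Counterclockwise angle from u to v, represented by its canonical
  representative in (-pi, pi] (so equality of these values is equality in R/2piZ).\<close>
definition ccw_angle :: "complex \<Rightarrow> complex \<Rightarrow> real" where
  "ccw_angle u v = Arg (v / u)"

text \<open>Oriented generalized circles (circles and lines), each represented by its set of
  contact elements (point, unit tangent vector in the direction of traversal).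
  s = 1: counterclockwise circle, s = -1: clockwise circle; lines are oriented by
  a unit direction vector.\<close>
definition oriented_circles :: "(complex \<times> complex) set set" where
  "oriented_circles =
     {{(p, s * \<i> * (p - c) / complex_of_real r) | p. cmod (p - c) = r} | c r s.
        r > 0 \<and> (s = 1 \<or> s = -1)}
   \<union> {{(a + complex_of_real t * v, v) | t. True} | a v. cmod v = 1}"

definition gcircles :: "complex set set" where
  "gcircles = (\<lambda>\<Gamma>. fst ` \<Gamma>) ` oriented_circles"

definition tangent_at :: "complex set \<Rightarrow> complex \<Rightarrow> complex \<Rightarrow> bool" where
  "tangent_at S p v \<longleftrightarrow> p \<in> S \<and> (\<exists>\<Gamma>\<in>oriented_circles. fst ` \<Gamma> = S \<and> (p, v) \<in> \<Gamma>)"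

text \<open>Framed n-gons (before identifying (u_i) with (-u_i)).\<close>
definition framed :: "nat \<Rightarrow> (complex list \<times> complex list) set" where
  "framed n = {(B, u). length B = n \<and> length u = n \<and>
     (\<forall>i<n. B ! i \<noteq> B ! nxt n i \<and> cmod (u ! i) = 1 \<and>
        ccw_angle (u ! i) (B ! nxt n i - B ! i) = ccw_angle (B ! nxt n i - B ! i) (u ! nxt n i))}"

definition generic_framed :: "nat \<Rightarrow> (complex list \<times> complex list) set" where
  "generic_framed n = {(B, u) \<in> framed n.
     \<not> (\<exists>i<n. \<exists>S\<in>gcircles.
          tangent_at S (B ! prv n i) (u ! prv n i) \<and> tangent_at S (B ! i) (u ! i) \<and>
          tangent_at S (B ! nxt n i) (u ! nxt n i))}"

definition frame_rel :: "nat \<Rightarrow> ((complex list \<times> complex list) \<times> (complex list \<times> complex list)) set" where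
  "frame_rel n = {(p, q). p \<in> generic_framed n \<and> q \<in> generic_framed n \<and>
      fst q = fst p \<and> (snd q = snd p \<or> snd q = map uminus (snd p))}"

text \<open>Oriented chains of n circles: consecutive circles are distinct and tangent with
  compatible orientations (linked gears: they share a contact element, i.e. have the
  same oriented tangent vector at the tangency point).\<close>
definition oriented_chains :: "nat \<Rightarrow> (complex \<times> complex) set list set" where
  "oriented_chains n = {C. length C = n \<and> (\<forall>i<n. C ! i \<in> oriented_circles \<and>
      fst ` (C ! i) \<noteq> fst ` (C ! nxt n i) \<and> C ! i \<inter> C ! nxt n i \<noteq> {})}"

definition tangency_point :: "(complex \<times> complex) set \<Rightarrow> (complex \<times> complex) set \<Rightarrow> complex" where
  "tangency_point \<Gamma> \<Delta> = the_elem (fst ` \<Gamma> \<inter> fst ` \<Delta>)"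

definition generic_chains :: "nat \<Rightarrow> (complex \<times> complex) set list set" where
  "generic_chains n = {C \<in> oriented_chains n. \<forall>i<n.
      tangency_point (C ! prv n i) (C ! i) \<noteq> tangency_point (C ! i) (C ! nxt n i)}"

definition reverse_orientation :: "(complex \<times> complex) set \<Rightarrow> (complex \<times> complex) set" where
  "reverse_orientation \<Gamma> = (\<lambda>(p, t). (p, - t)) ` \<Gamma>"

definition chain_rel :: "nat \<Rightarrow> ((complex \<times> complex) set list \<times> (complex \<times> complex) set list) set" where
  "chain_rel n = {(C, D). C \<in> generic_chains n \<and> D \<in> generic_chains n \<and>
      (D = C \<or> D = map reverse_orientation C)}"

definition chain_of :: "nat \<Rightarrow> complex list \<times> complex list \<Rightarrow> (complex \<times> complex) set list" where
  "chain_of n p = map (\<lambda>i. THE \<Gamma>. \<Gamma> \<in> oriented_circles \<and>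
        (fst p ! prv n i, snd p ! prv n i) \<in> \<Gamma> \<and> (fst p ! i, snd p ! i) \<in> \<Gamma>) [0..<n]"

definition chain_map :: "nat \<Rightarrow> (complex list \<times> complex list) set \<Rightarrow> (complex \<times> complex) set list set" where
  "chain_map n X = chain_rel n `` {chain_of n (SOME p. p \<in> X)}"

end

theory Submission
  imports Defs
begin

definition K :: "complex \<Rightarrow> complex \<Rightarrow> real \<Rightarrow> (complex \<times> complex) set" where
  "K p v k = {(x, v + \<i> * of_real k * (x - p)) | x. k * (cmod (x - p))^2 = 2 * Re (cnj (x - p) * \<i> * v)}"

lemma K_mem: "(x, y) \<in> K p v k \<longleftrightarrow> k * (cmod (x - p))^2 = 2 * Re (cnj (x - p) * \<i> * v) \<and> y = v + \<i> * of_real k * (x - p)"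
  unfolding K_def by auto

lemma unit_inv: "cmod v = 1 \<Longrightarrow> cnj v * v = 1"
  by (metis complex_norm_square mult.commute of_real_1 power_one)

lemma angle_iff:
  assumes "cmod v = 1" "cmod w = 1" "d \<noteq> 0"
  shows "ccw_angle v d = ccw_angle d w \<longleftrightarrow> w * cnj d = d * cnj v"
proof -
  have v0: "v \<noteq> 0" "w \<noteq> 0" using assms by auto
  have iv: "1 / v = cnj v" using unit_inv[OF assms(1)] v0
    by (metis divide_eq_eq mult.commute)
  have dd: "d * cnj d = of_real ((cmod d)^2)" by (metis complex_norm_square of_real_power)
  have "ccw_angle v d = ccw_angle d w \<longleftrightarrow> (\<exists>x. 0 < x \<and> d / v = of_real x * (w / d))"
    unfolding ccw_angle_def using assms v0 by (intro Arg_eq_iff) auto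
  also have "\<dots> \<longleftrightarrow> w * cnj d = d * cnj v"
  proof
    assume "\<exists>x. 0 < x \<and> d / v = of_real x * (w / d)"
    then obtain x where x: "0 < x" "d / v = of_real x * (w / d)" by blast
    have "cmod d = cmod (d / v)" using assms by (simp add: norm_divide)
    also have "\<dots> = cmod (of_real x * (w / d))" using x by simp
    also have "\<dots> = x / cmod d" using assms x by (simp add: norm_divide norm_mult)
    finally have h1: "cmod d = x / cmod d" .
    have "cmod d \<noteq> 0" using assms by simp
    hence xe: "x = (cmod d)^2" using h1 by (simp add: power2_eq_square eq_divide_eq)
    have "d * cnj v = d * (1 / v)" by (simp only: iv)
    also have "\<dots> = d / v" by simp
    also have "\<dots> = of_real ((cmod d)^2) * w / d" using x xe by simp
    also have "\<dots> = (d * cnj d) * w / d" by (simp only: dd)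
    also have "\<dots> = w * cnj d" using assms(3) by (simp add: field_simps del: complex_mult_cnj)
    finally show "w * cnj d = d * cnj v" by simp
  next
    assume h: "w * cnj d = d * cnj v"
    show "\<exists>x. 0 < x \<and> d / v = of_real x * (w / d)"
    proof (intro exI conjI)
      show "0 < (cmod d)^2" using assms by simp
      have "d / v = d * (1 / v)" by simp
      also have "\<dots> = d * cnj v" by (simp only: iv)
      also have "\<dots> = w * cnj d" using h by simp
      also have "\<dots> = (d * cnj d) * (w / d)" using assms(3) by (simp add: field_simps del: complex_mult_cnj)
      also have "\<dots> = of_real ((cmod d)^2) * (w / d)" by (simp only: dd)
      finally show "d / v = of_real ((cmod d)^2) * (w / d)" .
    qed
  qed
  finally show ?thesis .
qed

definition circ :: "complex \<Rightarrow> real \<Rightarrow> complex \<Rightarrow> (complex \<times> complex) set" where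
  "circ c r s = {(p, s * \<i> * (p - c) / complex_of_real r) | p. cmod (p - c) = r}"

definition lin :: "complex \<Rightarrow> complex \<Rightarrow> (complex \<times> complex) set" where
  "lin a v = {(a + complex_of_real t * v, v) | t. True}"

lemma OC_def2: "oriented_circles = {circ c r s | c r s. r > 0 \<and> (s = 1 \<or> s = -1)} \<union> {lin a v | a v. cmod v = 1}"
  unfolding oriented_circles_def circ_def lin_def by blast

lemma circ_mem: "(x, y) \<in> circ c r s \<longleftrightarrow> cmod (x - c) = r \<and> y = s * \<i> * (x - c) / complex_of_real r"
  unfolding circ_def by auto

lemma lin_mem: "(x, y) \<in> lin a v \<longleftrightarrow> y = v \<and> (\<exists>t. x = a + complex_of_real t * v)"
  unfolding lin_def by auto

lemma cmod_eq_iff: "r \<ge> 0 \<Longrightarrow> cmod z = r \<longleftrightarrow> (Re z)^2 + (Im z)^2 = r^2"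
  by (metis cmod_power2 norm_ge_zero power2_eq_iff_nonneg)

lemma cmod_one_iff: "cmod z = 1 \<longleftrightarrow> (Re z)^2 + (Im z)^2 = 1"
  using cmod_eq_iff[of 1 z] by simp

lemma circ_K_pt:
  assumes r: "r > 0" and s: "s = 1 \<or> s = -1" and p: "cmod (p - c) = r"
    and v: "v = s * \<i> * (p - c) / complex_of_real r"
  shows "cmod (x - c) = r \<longleftrightarrow> (Re s / r) * (cmod (x - p))^2 = 2 * Re (cnj (x - p) * \<i> * v)"
proof -
  have p2: "(Re p - Re c)^2 + (Im p - Im c)^2 = r^2" using p cmod_eq_iff[of r "p - c"] r by simp
  have "cmod (x - c) = r \<longleftrightarrow> (Re x - Re c)^2 + (Im x - Im c)^2 = r^2" using cmod_eq_iff[of r "x - c"] r by simp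
  also have "\<dots> \<longleftrightarrow> (Re x - Re p)^2 + (Im x - Im p)^2 = - 2 * ((Re x - Re p) * (Re p - Re c) + (Im x - Im p) * (Im p - Im c))"
    using p2 by algebra
  also have "\<dots> \<longleftrightarrow> (Re s / r) * (cmod (x - p))^2 = 2 * Re (cnj (x - p) * \<i> * v)"
    using s r unfolding v cmod_power2 by (auto simp: field_simps)
  finally show ?thesis .
qed

lemma circ_K_tan:
  assumes r: "r > 0" and s: "s = 1 \<or> s = -1"
    and v: "v = s * \<i> * (p - c) / complex_of_real r"
  shows "s * \<i> * (x - c) / complex_of_real r = v + \<i> * complex_of_real (Re s / r) * (x - p)"
  using s r unfolding v by (auto simp: field_simps)

lemma circ_eq_K:
  assumes r: "r > 0" and s: "s = 1 \<or> s = -1" and pv: "(p, v) \<in> circ c r s"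
  shows "circ c r s = K p v (Re s / r)"
proof -
  have p: "cmod (p - c) = r" and v: "v = s * \<i> * (p - c) / complex_of_real r" using pv by (auto simp: circ_mem)
  show ?thesis
  proof (rule set_eqI, clarify)
    fix x y
    show "(x, y) \<in> circ c r s \<longleftrightarrow> (x, y) \<in> K p v (Re s / r)"
      unfolding circ_mem K_mem using circ_K_pt[OF r s p v, of x] circ_K_tan[OF r s v, of x] by auto
  qed
qed

lemma Re_cnj_i: "Re (cnj z * \<i> * v) = Im z * Re v - Re z * Im v"
  by simp

lemma lin_pt:
  assumes "cmod v = 1"
  shows "(\<exists>t. x = p + complex_of_real t * v) \<longleftrightarrow> Re (cnj (x - p) * \<i> * v) = 0"
proof
  assume "\<exists>t. x = p + complex_of_real t * v"
  then obtain t where "x = p + complex_of_real t * v" by blast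
  thus "Re (cnj (x - p) * \<i> * v) = 0" by (simp add: algebra_simps)
next
  assume h: "Re (cnj (x - p) * \<i> * v) = 0"
  define a where "a = Re x - Re p"
  define b where "b = Im x - Im p"
  have h2: "b * Re v = a * Im v" using h unfolding Re_cnj_i a_def b_def by simp
  have u: "(Re v)^2 + (Im v)^2 = 1" using assms cmod_one_iff by blast
  let ?t = "a * Re v + b * Im v"
  have e1: "a = ?t * Re v"
  proof -
    have "?t * Re v = a * (Re v)^2 + (b * Re v) * Im v" by (simp add: algebra_simps power2_eq_square)
    also have "\<dots> = a * ((Re v)^2 + (Im v)^2)" using h2 by (simp add: algebra_simps power2_eq_square)
    finally show ?thesis using u by simp
  qed
  have e2: "b = ?t * Im v"
  proof -
    have "?t * Im v = (a * Im v) * Re v + b * (Im v)^2" by (simp add: algebra_simps power2_eq_square)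
    also have "\<dots> = b * ((Re v)^2 + (Im v)^2)" using h2[symmetric] by (simp add: algebra_simps power2_eq_square)
    finally show ?thesis using u by simp
  qed
  show "\<exists>t. x = p + complex_of_real t * v"
    by (rule exI[of _ ?t]) (use e1 e2 in \<open>simp add: complex_eq_iff a_def b_def\<close>)
qed

lemma lin_eq_K:
  assumes v: "cmod v = 1" and pv: "(p, w) \<in> lin a v"
  shows "lin a v = K p v 0" "w = v"
proof -
  obtain t0 where p: "p = a + complex_of_real t0 * v" and wv: "w = v" using pv by (auto simp: lin_mem)
  show "w = v" by fact
  show "lin a v = K p v 0"
  proof (rule set_eqI, clarify)
    fix x y
    have "(\<exists>t. x = a + complex_of_real t * v) \<longleftrightarrow> (\<exists>t. x = p + complex_of_real t * v)"
    proof
      assume "\<exists>t. x = a + complex_of_real t * v"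
      then obtain t where "x = a + complex_of_real t * v" by blast
      hence "x = p + complex_of_real (t - t0) * v" by (simp add: p algebra_simps)
      thus "\<exists>t. x = p + complex_of_real t * v" by blast
    next
      assume "\<exists>t. x = p + complex_of_real t * v"
      then obtain t where "x = p + complex_of_real t * v" by blast
      hence "x = a + complex_of_real (t + t0) * v" by (simp add: p algebra_simps)
      thus "\<exists>t. x = a + complex_of_real t * v" by blast
    qed
    thus "(x, y) \<in> lin a v \<longleftrightarrow> (x, y) \<in> K p v 0"
      unfolding lin_mem K_mem using lin_pt[OF v, of x p] by auto
  qed
qed

lemma OC_K:
  assumes G: "\<Gamma> \<in> oriented_circles" and pv: "(p, v) \<in> \<Gamma>"
  shows "cmod v = 1 \<and> (\<exists>k. \<Gamma> = K p v k)"
  using G unfolding OC_def2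
proof (elim UnE CollectE exE conjE)
  fix c r s assume r: "r > 0" and s: "s = 1 \<or> s = -1" and e: "\<Gamma> = circ c r s"
  have "(p, v) \<in> circ c r s" using pv e by simp
  hence "cmod (p - c) = r" "v = s * \<i> * (p - c) / complex_of_real r" by (auto simp: circ_mem)
  hence "cmod v = 1" using r s by (auto simp: norm_mult norm_divide)
  thus ?thesis using circ_eq_K[OF r s \<open>(p, v) \<in> circ c r s\<close>] e by blast
next
  fix a w assume w: "cmod w = 1" and e: "\<Gamma> = lin a w"
  have "(p, v) \<in> lin a w" using pv e by simp
  from lin_eq_K[OF w this] show ?thesis using e w by blast
qed

lemma K_OC:
  assumes v: "cmod v = 1"
  shows "K p v k \<in> oriented_circles"
proof (cases "k = 0")
  case True
  have "(p, v) \<in> lin p v" unfolding lin_mem by (auto intro: exI[of _ 0])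
  hence "lin p v = K p v 0" using lin_eq_K[OF v] by blast
  thus ?thesis using True v unfolding OC_def2 by blast
next
  case False
  define c where "c = p + \<i> * v / complex_of_real k"
  define r where "r = 1 / \<bar>k\<bar>"
  define s where "s = complex_of_real (sgn k)"
  have r: "r > 0" using False by (simp add: r_def)
  have s: "s = 1 \<or> s = -1" using False by (auto simp: s_def sgn_if)
  have "(p, v) \<in> circ c r s"
    unfolding circ_mem using False v
    by (auto simp: c_def r_def s_def norm_mult norm_divide sgn_if field_simps)
  from circ_eq_K[OF r s this] have "circ c r s = K p v (Re s / r)" .
  moreover have "Re s / r = k" using False by (auto simp: s_def r_def sgn_if)
  ultimately show ?thesis using r s unfolding OC_def2 by blast
qed

lemma K_rel:
  assumes v: "cmod v = 1" and qw: "(q, w) \<in> K p v k"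
  shows "w * cnj (q - p) = (q - p) * cnj v"
proof -
  have h: "k * (cmod (q - p))^2 = 2 * Re (cnj (q - p) * \<i> * v)" and w: "w = v + \<i> * complex_of_real k * (q - p)"
    using qw by (auto simp: K_mem)
  have u: "(Re v)^2 + (Im v)^2 = 1" using v cmod_one_iff by blast
  have h': "k * ((Re q - Re p)^2 + (Im q - Im p)^2) = 2 * ((Im q - Im p) * Re v - (Re q - Re p) * Im v)"
    using h unfolding cmod_power2 Re_cnj_i by simp
  show ?thesis unfolding w complex_eq_iff
    using h' u by (auto simp: algebra_simps power2_eq_square)
qed

lemma K_k:
  assumes "(q, w) \<in> K p v k" "q \<noteq> p"
  shows "k = 2 * Re (cnj (q - p) * \<i> * v) / (cmod (q - p))^2"
  using assms by (auto simp: K_mem field_simps)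

lemma K_pt:
  assumes "q \<noteq> p"
  shows "(q, v + \<i> * complex_of_real (2 * Re (cnj (q - p) * \<i> * v) / (cmod (q - p))^2) * (q - p)) \<in> K p v (2 * Re (cnj (q - p) * \<i> * v) / (cmod (q - p))^2)"
  using assms by (auto simp: K_mem field_simps)

lemma OC_unit: "\<Gamma> \<in> oriented_circles \<Longrightarrow> (p, v) \<in> \<Gamma> \<Longrightarrow> cmod v = 1"
  using OC_K by blast

lemma OC_tan_unique:
  assumes "\<Gamma> \<in> oriented_circles" "(p, v) \<in> \<Gamma>" "(p, w) \<in> \<Gamma>"
  shows "v = w"
proof -
  obtain k where "\<Gamma> = K p v k" using OC_K[OF assms(1,2)] by blast
  thus ?thesis using assms(3) by (simp add: K_mem)
qed

lemma OC_rel: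
  assumes "\<Gamma> \<in> oriented_circles" "(p, v) \<in> \<Gamma>" "(q, w) \<in> \<Gamma>"
  shows "w * cnj (q - p) = (q - p) * cnj v"
proof -
  obtain k where "\<Gamma> = K p v k" "cmod v = 1" using OC_K[OF assms(1,2)] by blast
  thus ?thesis using assms(3) K_rel by blast
qed

lemma OC_same:
  assumes G1: "\<Gamma>1 \<in> oriented_circles" and G2: "\<Gamma>2 \<in> oriented_circles"
    and "(p, v) \<in> \<Gamma>1" "(p, v) \<in> \<Gamma>2" "q \<in> fst ` \<Gamma>1" "q \<in> fst ` \<Gamma>2" "q \<noteq> p"
  shows "\<Gamma>1 = \<Gamma>2"
proof -
  obtain k1 where k1: "\<Gamma>1 = K p v k1" using OC_K[OF G1 assms(3)] by blast
  obtain k2 where k2: "\<Gamma>2 = K p v k2" using OC_K[OF G2 assms(4)] by blast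
  obtain w1 where "(q, w1) \<in> \<Gamma>1" using assms(5) by force
  hence e1: "k1 = 2 * Re (cnj (q - p) * \<i> * v) / (cmod (q - p))^2" using K_k k1 assms(7) by blast
  obtain w2 where "(q, w2) \<in> \<Gamma>2" using assms(6) by force
  hence e2: "k2 = 2 * Re (cnj (q - p) * \<i> * v) / (cmod (q - p))^2" using K_k k2 assms(7) by blast
  show ?thesis using k1 k2 e1 e2 by simp
qed

lemma OC_exists:
  assumes v: "cmod v = 1" and "p \<noteq> q" and rel: "w * cnj (q - p) = (q - p) * cnj v"
  shows "\<exists>\<Gamma>\<in>oriented_circles. (p, v) \<in> \<Gamma> \<and> (q, w) \<in> \<Gamma>"
proof -
  define k where "k = 2 * Re (cnj (q - p) * \<i> * v) / (cmod (q - p))^2"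
  define w' where "w' = v + \<i> * complex_of_real k * (q - p)"
  have qw': "(q, w') \<in> K p v k" using K_pt[of q p v] assms(2) unfolding k_def w'_def by auto
  have "w' * cnj (q - p) = (q - p) * cnj v" using K_rel[OF v qw'] .
  hence "w' * cnj (q - p) = w * cnj (q - p)" using rel by simp
  moreover have "cnj (q - p) \<noteq> 0" using assms(2) by simp
  ultimately have "w' = w" by simp
  moreover have "(p, v) \<in> K p v k" by (simp add: K_mem)
  ultimately show ?thesis using K_OC[OF v] qw' by blast
qed

lemma OC_unique:
  assumes v: "cmod v = 1" and "p \<noteq> q" and rel: "w * cnj (q - p) = (q - p) * cnj v"
  shows "\<exists>!\<Gamma>. \<Gamma> \<in> oriented_circles \<and> (p, v) \<in> \<Gamma> \<and> (q, w) \<in> \<Gamma>"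
proof -
  obtain \<Gamma> where G: "\<Gamma> \<in> oriented_circles" "(p, v) \<in> \<Gamma>" "(q, w) \<in> \<Gamma>" using OC_exists[OF assms] by blast
  show ?thesis
  proof (rule ex1I[of _ \<Gamma>])
    show "\<Gamma> \<in> oriented_circles \<and> (p, v) \<in> \<Gamma> \<and> (q, w) \<in> \<Gamma>" using G by blast
    fix \<Delta> assume D: "\<Delta> \<in> oriented_circles \<and> (p, v) \<in> \<Delta> \<and> (q, w) \<in> \<Delta>"
    show "\<Delta> = \<Gamma>" by (rule OC_same[of \<Delta> \<Gamma> p v q]) (use D G assms(2) in force)+
  qed
qed

lemma S_eq:
  assumes G: "\<Gamma> \<in> oriented_circles" "(p, v) \<in> \<Gamma>" "(q, w) \<in> \<Gamma>" "p \<noteq> q"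
    and S: "tangent_at S p v" "q \<in> S"
  shows "S = fst ` \<Gamma>"
proof -
  obtain \<Delta> where D: "\<Delta> \<in> oriented_circles" "fst ` \<Delta> = S" "(p, v) \<in> \<Delta>" using S(1) unfolding tangent_at_def by blast
  have "q \<in> fst ` \<Gamma>" using G(3) by force
  have "\<Delta> = \<Gamma>" by (rule OC_same[of \<Delta> \<Gamma> p v q]) (use D G S \<open>q \<in> fst ` \<Gamma>\<close> in auto)
  thus ?thesis using D by simp
qed

lemma S_unique:
  assumes v: "cmod v = 1" and "p \<noteq> q" and rel: "w * cnj (q - p) = (q - p) * cnj v"
  shows "\<exists>!S. S \<in> gcircles \<and> tangent_at S p v \<and> tangent_at S q w"
proof -
  obtain \<Gamma> where G: "\<Gamma> \<in> oriented_circles" "(p, v) \<in> \<Gamma>" "(q, w) \<in> \<Gamma>" using OC_exists[OF assms] by blast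
  show ?thesis
  proof (rule ex1I[of _ "fst ` \<Gamma>"])
    show "fst ` \<Gamma> \<in> gcircles \<and> tangent_at (fst ` \<Gamma>) p v \<and> tangent_at (fst ` \<Gamma>) q w"
    proof (intro conjI)
      show "fst ` \<Gamma> \<in> gcircles" unfolding gcircles_def using G(1) by (rule imageI)
      show "tangent_at (fst ` \<Gamma>) p v" unfolding tangent_at_def using G(1,2) by (metis fst_conv image_eqI)
      show "tangent_at (fst ` \<Gamma>) q w" unfolding tangent_at_def using G(1,3) by (metis fst_conv image_eqI)
    qed
    fix S assume "S \<in> gcircles \<and> tangent_at S p v \<and> tangent_at S q w"
    thus "S = fst ` \<Gamma>" using S_eq[OF G assms(2)] unfolding tangent_at_def by blast
  qed
qed

lemma OC_inter:
  assumes G1: "\<Gamma>1 \<in> oriented_circles" and G2: "\<Gamma>2 \<in> oriented_circles"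
    and "(p, v) \<in> \<Gamma>1" "(p, v) \<in> \<Gamma>2" "fst ` \<Gamma>1 \<noteq> fst ` \<Gamma>2"
  shows "fst ` \<Gamma>1 \<inter> fst ` \<Gamma>2 = {p}" "\<Gamma>1 \<inter> \<Gamma>2 = {(p, v)}" "tangency_point \<Gamma>1 \<Gamma>2 = p"
proof -
  show A: "fst ` \<Gamma>1 \<inter> fst ` \<Gamma>2 = {p}"
  proof
    show "fst ` \<Gamma>1 \<inter> fst ` \<Gamma>2 \<subseteq> {p}"
    proof
      fix q assume q: "q \<in> fst ` \<Gamma>1 \<inter> fst ` \<Gamma>2"
      show "q \<in> {p}"
      proof (rule ccontr)
        assume "q \<notin> {p}"
        hence "\<Gamma>1 = \<Gamma>2" using OC_same[OF G1 G2 assms(3,4)] q by blast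
        thus False using assms(5) by simp
      qed
    qed
    show "{p} \<subseteq> fst ` \<Gamma>1 \<inter> fst ` \<Gamma>2" using assms(3,4) by force
  qed
  thus "tangency_point \<Gamma>1 \<Gamma>2 = p" unfolding tangency_point_def by simp
  show "\<Gamma>1 \<inter> \<Gamma>2 = {(p, v)}"
  proof
    show "\<Gamma>1 \<inter> \<Gamma>2 \<subseteq> {(p, v)}"
    proof (clarify)
      fix x y assume xy: "(x, y) \<in> \<Gamma>1" "(x, y) \<in> \<Gamma>2"
      hence "x \<in> fst ` \<Gamma>1 \<inter> fst ` \<Gamma>2" by force
      hence "x = p" using A by blast
      thus "x = p \<and> y = v" using OC_tan_unique[OF G1 assms(3)] xy by blast
    qed
    show "{(p, v)} \<subseteq> \<Gamma>1 \<inter> \<Gamma>2" using assms(3,4) by simp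
  qed
qed

lemma rev_mem: "(p, v) \<in> reverse_orientation \<Gamma> \<longleftrightarrow> (p, - v) \<in> \<Gamma>"
  unfolding reverse_orientation_def by force

lemma rev_rev: "reverse_orientation (reverse_orientation \<Gamma>) = \<Gamma>"
  unfolding reverse_orientation_def by (force simp: image_image)

lemma OC_nonempty: "\<Gamma> \<in> oriented_circles \<Longrightarrow> \<Gamma> \<noteq> {}"
  unfolding OC_def2
proof (elim UnE CollectE exE conjE)
  fix c r s assume "r > 0" "\<Gamma> = circ c r s"
  moreover have "(c + complex_of_real r, s * \<i> * (c + complex_of_real r - c) / complex_of_real r) \<in> circ c r s"
    using \<open>r > 0\<close> unfolding circ_mem by simp
  ultimately show "\<Gamma> \<noteq> {}" by blast
next
  fix a v assume "\<Gamma> = lin a v"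
  moreover have "(a, v) \<in> lin a v" unfolding lin_mem by (auto intro: exI[of _ 0])
  ultimately show "\<Gamma> \<noteq> {}" by blast
qed

lemma K_rev: "reverse_orientation (K p v k) = K p (- v) (- k)"
proof (rule set_eqI, clarify)
  fix x y
  show "(x, y) \<in> reverse_orientation (K p v k) \<longleftrightarrow> (x, y) \<in> K p (- v) (- k)"
    unfolding rev_mem K_mem by (auto simp: algebra_simps)
qed

lemma OC_rev: "\<Gamma> \<in> oriented_circles \<Longrightarrow> reverse_orientation \<Gamma> \<in> oriented_circles"
proof -
  assume G: "\<Gamma> \<in> oriented_circles"
  obtain p v where "(p, v) \<in> \<Gamma>" using OC_nonempty[OF G] by auto
  then obtain k where "\<Gamma> = K p v k" "cmod v = 1" using OC_K[OF G] by blast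
  thus ?thesis using K_rev K_OC[of "- v"] by simp
qed

lemma nxt_lt: "0 < n \<Longrightarrow> nxt n i < n" by (simp add: nxt_def)
lemma prv_lt: "0 < n \<Longrightarrow> prv n i < n" by (simp add: prv_def)
lemma prv_nxt: "i < n \<Longrightarrow> prv n (nxt n i) = i"
proof -
  assume i: "i < n"
  show ?thesis
  proof (cases "i + 1 < n")
    case True
    hence "nxt n i = i + 1" by (simp add: nxt_def)
    thus ?thesis using i by (simp add: prv_def)
  next
    case False
    hence "i + 1 = n" using i by simp
    hence "nxt n i = 0" by (simp add: nxt_def)
    thus ?thesis using i \<open>i + 1 = n\<close> by (simp add: prv_def)
  qed
qed
lemma nxt_prv: "i < n \<Longrightarrow> nxt n (prv n i) = i"
proof -
  assume i: "i < n"
  show ?thesis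
  proof (cases "i = 0")
    case True
    hence "prv n i = n - 1" using i by (simp add: prv_def)
    thus ?thesis using i True by (simp add: nxt_def)
  next
    case False
    hence e: "i + n - 1 = (i - 1) + n" by simp
    have "prv n i = ((i - 1) + n) mod n" unfolding prv_def e ..
    also have "\<dots> = i - 1" using i by simp
    finally have "prv n i = i - 1" .
    thus ?thesis using i False by (simp add: nxt_def)
  qed
qed

lemma framedD:
  assumes "(B, u) \<in> framed n" "i < n"
  shows "B ! i \<noteq> B ! nxt n i" "cmod (u ! i) = 1" "cmod (u ! nxt n i) = 1"
    "u ! nxt n i * cnj (B ! nxt n i - B ! i) = (B ! nxt n i - B ! i) * cnj (u ! i)"
proof -
  have n: "0 < n" using assms(2) by simp
  have a: "B ! i \<noteq> B ! nxt n i" "cmod (u ! i) = 1"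
    "ccw_angle (u ! i) (B ! nxt n i - B ! i) = ccw_angle (B ! nxt n i - B ! i) (u ! nxt n i)"
    using assms unfolding framed_def by auto
  have b: "cmod (u ! nxt n i) = 1" using assms nxt_lt[OF n] unfolding framed_def by auto
  show "B ! i \<noteq> B ! nxt n i" "cmod (u ! i) = 1" "cmod (u ! nxt n i) = 1" using a b by auto
  show "u ! nxt n i * cnj (B ! nxt n i - B ! i) = (B ! nxt n i - B ! i) * cnj (u ! i)"
    using angle_iff[OF a(2) b] a by simp
qed

lemma framed_len: "(B, u) \<in> framed n \<Longrightarrow> length B = n \<and> length u = n"
  unfolding framed_def by auto

lemma chain_of_nth: "i < n \<Longrightarrow> chain_of n (B, u) ! i =
   (THE \<Gamma>. \<Gamma> \<in> oriented_circles \<and> (B ! prv n i, u ! prv n i) \<in> \<Gamma> \<and> (B ! i, u ! i) \<in> \<Gamma>)"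
  unfolding chain_of_def by simp

lemma chain_of_len: "length (chain_of n p) = n"
  unfolding chain_of_def by simp

lemma framed_ex1:
  assumes "(B, u) \<in> framed n" "i < n"
  shows "\<exists>!\<Gamma>. \<Gamma> \<in> oriented_circles \<and> (B ! prv n i, u ! prv n i) \<in> \<Gamma> \<and> (B ! i, u ! i) \<in> \<Gamma>"
    "\<exists>!S. S \<in> gcircles \<and> tangent_at S (B ! prv n i) (u ! prv n i) \<and> tangent_at S (B ! i) (u ! i)"
    "B ! prv n i \<noteq> B ! i"
proof -
  have n: "0 < n" using assms(2) by simp
  note f = framedD[OF assms(1) prv_lt[OF n, of i]]
  note e = nxt_prv[OF assms(2)]
  show "\<exists>!\<Gamma>. \<Gamma> \<in> oriented_circles \<and> (B ! prv n i, u ! prv n i) \<in> \<Gamma> \<and> (B ! i, u ! i) \<in> \<Gamma>"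
    using OC_unique[OF f(2), of "B ! prv n i" "B ! i" "u ! i"] f unfolding e by blast
  show "\<exists>!S. S \<in> gcircles \<and> tangent_at S (B ! prv n i) (u ! prv n i) \<and> tangent_at S (B ! i) (u ! i)"
    using S_unique[OF f(2), of "B ! prv n i" "B ! i" "u ! i"] f unfolding e by blast
  show "B ! prv n i \<noteq> B ! i" using f(1) unfolding e .
qed

lemma chain_of_props:
  assumes "(B, u) \<in> framed n" "i < n"
  shows "chain_of n (B, u) ! i \<in> oriented_circles" "(B ! prv n i, u ! prv n i) \<in> chain_of n (B, u) ! i"
    "(B ! i, u ! i) \<in> chain_of n (B, u) ! i"
proof -
  have "chain_of n (B, u) ! i \<in> oriented_circles \<and> (B ! prv n i, u ! prv n i) \<in> chain_of n (B, u) ! i \<and> (B ! i, u ! i) \<in> chain_of n (B, u) ! i"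
    unfolding chain_of_nth[OF assms(2)] using theI'[OF framed_ex1(1)[OF assms]] .
  thus "chain_of n (B, u) ! i \<in> oriented_circles" "(B ! prv n i, u ! prv n i) \<in> chain_of n (B, u) ! i"
    "(B ! i, u ! i) \<in> chain_of n (B, u) ! i" by auto
qed

lemma chain_of_props2:
  assumes "(B, u) \<in> framed n" "i < n"
  shows "(B ! i, u ! i) \<in> chain_of n (B, u) ! nxt n i" "(B ! nxt n i, u ! nxt n i) \<in> chain_of n (B, u) ! nxt n i"
    "chain_of n (B, u) ! nxt n i \<in> oriented_circles"
  using chain_of_props[OF assms(1) nxt_lt[of n i]] assms(2) prv_nxt[OF assms(2)] by auto

lemma generic_framedD:
  assumes "(B, u) \<in> generic_framed n" "i < n"
  shows "fst ` (chain_of n (B, u) ! i) \<noteq> fst ` (chain_of n (B, u) ! nxt n i)"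
proof
  assume eq: "fst ` (chain_of n (B, u) ! i) = fst ` (chain_of n (B, u) ! nxt n i)"
  have F: "(B, u) \<in> framed n" using assms(1) unfolding generic_framed_def by auto
  let ?S = "fst ` (chain_of n (B, u) ! i)"
  note c1 = chain_of_props[OF F assms(2)]
  note c2 = chain_of_props2[OF F assms(2)]
  have "?S \<in> gcircles" unfolding gcircles_def using c1(1) by (rule imageI)
  moreover have "tangent_at ?S (B ! prv n i) (u ! prv n i)" unfolding tangent_at_def using c1(1,2) by (metis fst_conv image_eqI)
  moreover have "tangent_at ?S (B ! i) (u ! i)" unfolding tangent_at_def using c1(1,3) by (metis fst_conv image_eqI)
  moreover have "tangent_at ?S (B ! nxt n i) (u ! nxt n i)" unfolding tangent_at_def eq using c2(2,3) by (metis fst_conv image_eqI)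
  ultimately show False using assms unfolding generic_framed_def by blast
qed

lemma GF_framed: "p \<in> generic_framed n \<Longrightarrow> p \<in> framed n"
  unfolding generic_framed_def by auto

lemma chain_of_generic:
  assumes G: "(B, u) \<in> generic_framed n"
  shows "chain_of n (B, u) \<in> generic_chains n"
proof -
  have F: "(B, u) \<in> framed n" using GF_framed[OF G] .
  let ?C = "chain_of n (B, u)"
  have tp: "tangency_point (?C ! i) (?C ! nxt n i) = B ! i" if i: "i < n" for i
    using OC_inter(3)[OF chain_of_props(1)[OF F i] chain_of_props2(3)[OF F i] chain_of_props(3)[OF F i]
        chain_of_props2(1)[OF F i] generic_framedD[OF G i]] .
  have oc: "?C \<in> oriented_chains n"
    unfolding oriented_chains_def
  proof (intro CollectI conjI allI impI)
    show "length ?C = n" by (rule chain_of_len)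
    fix i assume i: "i < n"
    show "?C ! i \<in> oriented_circles" using chain_of_props(1)[OF F i] .
    show "fst ` (?C ! i) \<noteq> fst ` (?C ! nxt n i)" using generic_framedD[OF G i] .
    show "?C ! i \<inter> ?C ! nxt n i \<noteq> {}" using chain_of_props(3)[OF F i] chain_of_props2(1)[OF F i] by blast
  qed
  show ?thesis unfolding generic_chains_def
  proof (intro CollectI conjI allI impI oc)
    fix i assume i: "i < n"
    have n: "0 < n" using i by simp
    have "tangency_point (?C ! prv n i) (?C ! i) = B ! prv n i"
      using tp[OF prv_lt[of n i, OF n]] unfolding nxt_prv[OF i] .
    moreover have "tangency_point (?C ! i) (?C ! nxt n i) = B ! i" using tp[OF i] .
    ultimately show "tangency_point (?C ! prv n i) (?C ! i) \<noteq> tangency_point (?C ! i) (?C ! nxt n i)"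
      using framed_ex1(3)[OF F i] by simp
  qed
qed

lemma chain_of_neg:
  assumes F: "(B, u) \<in> framed n"
  shows "chain_of n (B, map uminus u) = map reverse_orientation (chain_of n (B, u))"
proof (rule nth_equalityI)
  show "length (chain_of n (B, map uminus u)) = length (map reverse_orientation (chain_of n (B, u)))"
    by (simp add: chain_of_len)
  fix i assume "i < length (chain_of n (B, map uminus u))"
  hence i: "i < n" by (simp add: chain_of_len)
  have n: "0 < n" using i by simp
  have lu: "length u = n" using framed_len[OF F] by simp
  let ?G = "reverse_orientation (chain_of n (B, u) ! i)"
  note c = chain_of_props[OF F i]
  have mp: "map uminus u ! prv n i = - (u ! prv n i)" using prv_lt[OF n] lu by simp
  have mi: "map uminus u ! i = - (u ! i)" using i lu by simp
  have "(THE \<Gamma>. \<Gamma> \<in> oriented_circles \<and> (B ! prv n i, map uminus u ! prv n i) \<in> \<Gamma> \<and> (B ! i, map uminus u ! i) \<in> \<Gamma>) = ?G"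
  proof (rule the_equality)
    show "?G \<in> oriented_circles \<and> (B ! prv n i, map uminus u ! prv n i) \<in> ?G \<and> (B ! i, map uminus u ! i) \<in> ?G"
      unfolding mp mi rev_mem using c OC_rev by simp
    fix \<Delta> assume D: "\<Delta> \<in> oriented_circles \<and> (B ! prv n i, map uminus u ! prv n i) \<in> \<Delta> \<and> (B ! i, map uminus u ! i) \<in> \<Delta>"
    have G2: "(B ! prv n i, - (u ! prv n i)) \<in> ?G" "(B ! i, - (u ! i)) \<in> ?G" unfolding rev_mem using c by auto
    show "\<Delta> = ?G"
    proof (rule OC_same[of \<Delta> ?G "B ! prv n i" "- (u ! prv n i)" "B ! i"])
      show "\<Delta> \<in> oriented_circles" using D by simp
      show "?G \<in> oriented_circles" using OC_rev c(1) by simp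
      show "(B ! prv n i, - u ! prv n i) \<in> \<Delta>" using D mp by simp
      show "(B ! prv n i, - u ! prv n i) \<in> ?G" using G2 by simp
      show "B ! i \<in> fst ` \<Delta>" using D by force
      show "B ! i \<in> fst ` ?G" using G2 by force
      show "B ! i \<noteq> B ! prv n i" using framed_ex1(3)[OF F i] by simp
    qed
  qed
  thus "chain_of n (B, map uminus u) ! i = map reverse_orientation (chain_of n (B, u)) ! i"
    using chain_of_nth[OF i, of B "map uminus u"] i by (simp add: chain_of_len)
qed

lemma frame_rel_chain:
  assumes "(p, q) \<in> frame_rel n"
  shows "(chain_of n p, chain_of n q) \<in> chain_rel n"
proof -
  obtain B u where p: "p = (B, u)" by (cases p)
  have G: "p \<in> generic_framed n" "q \<in> generic_framed n" and q: "fst q = B" "snd q = u \<or> snd q = map uminus u"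
    using assms unfolding frame_rel_def p by auto
  have q': "q = (B, u) \<or> q = (B, map uminus u)" using q by (cases q) auto
  have g1: "chain_of n p \<in> generic_chains n" using chain_of_generic G(1) p by simp
  have g2: "chain_of n q \<in> generic_chains n" using chain_of_generic G(2) q' by auto
  have "chain_of n q = chain_of n p \<or> chain_of n q = map reverse_orientation (chain_of n p)"
    using q' chain_of_neg[OF GF_framed[OF G(1)[unfolded p]]] p by auto
  thus ?thesis unfolding chain_rel_def using g1 g2 by blast
qed

lemma map_uminus_uminus: "map uminus (map uminus (u :: complex list)) = u"
  by (induction u) auto

lemma equiv_FR: "equiv (generic_framed n) (frame_rel n)"
proof (rule equivI)
  show "frame_rel n \<subseteq> generic_framed n \<times> generic_framed n" unfolding frame_rel_def by auto
  show "refl_on (generic_framed n) (frame_rel n)" unfolding refl_on_def frame_rel_def by auto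
  show "sym (frame_rel n)" unfolding sym_def frame_rel_def using map_uminus_uminus by fastforce
  show "trans (frame_rel n)" unfolding trans_def frame_rel_def using map_uminus_uminus by fastforce
qed

lemma map_rev_rev: "map reverse_orientation (map reverse_orientation C) = C"
  by (induction C) (auto simp: rev_rev)

lemma equiv_CR: "equiv (generic_chains n) (chain_rel n)"
proof (rule equivI)
  show "chain_rel n \<subseteq> generic_chains n \<times> generic_chains n" unfolding chain_rel_def by auto
  show "refl_on (generic_chains n) (chain_rel n)" unfolding refl_on_def chain_rel_def by auto
  show "sym (chain_rel n)" unfolding sym_def chain_rel_def using map_rev_rev by fastforce
  show "trans (chain_rel n)" unfolding trans_def chain_rel_def using map_rev_rev by fastforce
qed

lemma chain_of_recover:
  assumes G: "(B, u) \<in> generic_framed n" and i: "i < n"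
  shows "chain_of n (B, u) ! i \<inter> chain_of n (B, u) ! nxt n i = {(B ! i, u ! i)}"
proof -
  have F: "(B, u) \<in> framed n" using GF_framed[OF G] .
  show ?thesis
    using OC_inter(2)[OF chain_of_props(1)[OF F i] chain_of_props2(3)[OF F i] chain_of_props(3)[OF F i]
        chain_of_props2(1)[OF F i] generic_framedD[OF G i]] .
qed

lemma chain_of_inj:
  assumes "p \<in> generic_framed n" "q \<in> generic_framed n" "chain_of n p = chain_of n q"
  shows "p = q"
proof -
  obtain B u where p: "p = (B, u)" by (cases p)
  obtain B' u' where q: "q = (B', u')" by (cases q)
  have l: "length B = n" "length u = n" "length B' = n" "length u' = n"
    using framed_len GF_framed assms(1,2) p q by blast+
  have e: "B ! i = B' ! i \<and> u ! i = u' ! i" if i: "i < n" for i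
  proof -
    have "{(B ! i, u ! i)} = {(B' ! i, u' ! i)}"
      using chain_of_recover[OF assms(1)[unfolded p] i] chain_of_recover[OF assms(2)[unfolded q] i] assms(3) p q by simp
    thus ?thesis by simp
  qed
  have "B = B'" by (rule nth_equalityI) (use l e in auto)
  moreover have "u = u'" by (rule nth_equalityI) (use l e in auto)
  ultimately show ?thesis using p q by simp
qed

lemma chain_surj:
  assumes C: "C \<in> generic_chains n"
  shows "\<exists>p \<in> generic_framed n. chain_of n p = C"
proof -
  have OCC: "C \<in> oriented_chains n" using C unfolding generic_chains_def by auto
  have lC: "length C = n" using OCC unfolding oriented_chains_def by auto
  have Ci: "C ! i \<in> oriented_circles" "fst ` (C ! i) \<noteq> fst ` (C ! nxt n i)" "C ! i \<inter> C ! nxt n i \<noteq> {}"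
    if "i < n" for i using OCC that unfolding oriented_chains_def by auto
  have gen: "tangency_point (C ! prv n i) (C ! i) \<noteq> tangency_point (C ! i) (C ! nxt n i)" if "i < n" for i
    using C that unfolding generic_chains_def by auto
  define e where "e i = (SOME e. e \<in> C ! i \<inter> C ! nxt n i)" for i
  have e_in: "e i \<in> C ! i" "e i \<in> C ! nxt n i" if "i < n" for i
    using someI_ex[of "\<lambda>e. e \<in> C ! i \<inter> C ! nxt n i"] Ci(3)[OF that] unfolding e_def by auto
  define B where "B = map (\<lambda>i. fst (e i)) [0..<n]"
  define u where "u = map (\<lambda>i. snd (e i)) [0..<n]"
  have Bi: "(B ! i, u ! i) = e i" if "i < n" for i using that by (simp add: B_def u_def)
  have lB: "length B = n" "length u = n" by (simp_all add: B_def u_def)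
  have m1: "(B ! i, u ! i) \<in> C ! i" "(B ! i, u ! i) \<in> C ! nxt n i" if "i < n" for i
    using e_in[OF that] Bi[OF that] by auto
  have m0: "(B ! prv n i, u ! prv n i) \<in> C ! i" if i: "i < n" for i
  proof -
    have n: "0 < n" using i by simp
    show ?thesis using m1(2)[OF prv_lt[of n i, OF n]] unfolding nxt_prv[OF i] .
  qed
  have tp: "tangency_point (C ! i) (C ! nxt n i) = B ! i" if i: "i < n" for i
  proof -
    have n: "0 < n" using i by simp
    show ?thesis using OC_inter(3)[OF Ci(1)[OF i] Ci(1)[OF nxt_lt[OF n]] m1[OF i] Ci(2)[OF i]] .
  qed
  have dist: "B ! i \<noteq> B ! nxt n i" if i: "i < n" for i
  proof -
    have n: "0 < n" using i by simp
    have j: "nxt n i < n" using nxt_lt[OF n] .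
    show ?thesis using gen[OF j] tp[OF j] tp[OF i] unfolding prv_nxt[OF i] by simp
  qed
  have F: "(B, u) \<in> framed n"
    unfolding framed_def
  proof (intro CollectI case_prodI conjI allI impI lB)
    fix i assume i: "i < n"
    have n: "0 < n" using i by simp
    have j: "nxt n i < n" using nxt_lt[OF n] .
    show "B ! i \<noteq> B ! nxt n i" using dist[OF i] .
    have u1: "cmod (u ! i) = 1" using OC_unit[OF Ci(1)[OF i] m1(1)[OF i]] .
    show "cmod (u ! i) = 1" using u1 .
    have u2: "cmod (u ! nxt n i) = 1" using OC_unit[OF Ci(1)[OF j] m1(1)[OF j]] .
    have r: "u ! nxt n i * cnj (B ! nxt n i - B ! i) = (B ! nxt n i - B ! i) * cnj (u ! i)"
      using OC_rel[OF Ci(1)[OF j] m1(2)[OF i] m1(1)[OF j]] .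
    show "ccw_angle (u ! i) (B ! nxt n i - B ! i) = ccw_angle (B ! nxt n i - B ! i) (u ! nxt n i)"
      using angle_iff[OF u1 u2, of "B ! nxt n i - B ! i"] r dist[OF i] by simp
  qed
  have G: "(B, u) \<in> generic_framed n"
    unfolding generic_framed_def
  proof (intro CollectI case_prodI conjI F notI)
    assume "\<exists>i<n. \<exists>S\<in>gcircles. tangent_at S (B ! prv n i) (u ! prv n i) \<and> tangent_at S (B ! i) (u ! i) \<and>
          tangent_at S (B ! nxt n i) (u ! nxt n i)"
    then obtain i S where i: "i < n" and S: "tangent_at S (B ! prv n i) (u ! prv n i)" "tangent_at S (B ! i) (u ! i)"
          "tangent_at S (B ! nxt n i) (u ! nxt n i)" by blast
    have n: "0 < n" using i by simp
    have j: "nxt n i < n" using nxt_lt[OF n] .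
    have d0: "B ! prv n i \<noteq> B ! i" using dist[OF prv_lt[of n i, OF n]] unfolding nxt_prv[OF i] .
    have "S = fst ` (C ! i)"
      using S_eq[OF Ci(1)[OF i] m0[OF i] m1(1)[OF i] d0 S(1)] S(2) unfolding tangent_at_def by blast
    moreover have "S = fst ` (C ! nxt n i)"
      using S_eq[OF Ci(1)[OF j] m1(2)[OF i] m1(1)[OF j] dist[OF i] S(2)] S(3) unfolding tangent_at_def by blast
    ultimately show False using Ci(2)[OF i] by simp
  qed
  have "chain_of n (B, u) = C"
  proof (rule nth_equalityI)
    show "length (chain_of n (B, u)) = length C" using lC chain_of_len by simp
    fix i assume "i < length (chain_of n (B, u))"
    hence i: "i < n" by (simp add: chain_of_len)
    have n: "0 < n" using i by simp
    have d0: "B ! prv n i \<noteq> B ! i" using dist[OF prv_lt[of n i, OF n]] unfolding nxt_prv[OF i] .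
    have "(THE \<Gamma>. \<Gamma> \<in> oriented_circles \<and> (B ! prv n i, u ! prv n i) \<in> \<Gamma> \<and> (B ! i, u ! i) \<in> \<Gamma>) = C ! i"
    proof (rule the_equality)
      show "C ! i \<in> oriented_circles \<and> (B ! prv n i, u ! prv n i) \<in> C ! i \<and> (B ! i, u ! i) \<in> C ! i"
        using Ci(1)[OF i] m0[OF i] m1(1)[OF i] by blast
      fix \<Delta> assume D: "\<Delta> \<in> oriented_circles \<and> (B ! prv n i, u ! prv n i) \<in> \<Delta> \<and> (B ! i, u ! i) \<in> \<Delta>"
      show "\<Delta> = C ! i"
      proof (rule OC_same[of \<Delta> "C ! i" "B ! prv n i" "u ! prv n i" "B ! i"])
        show "\<Delta> \<in> oriented_circles" using D by simp
        show "C ! i \<in> oriented_circles" using Ci(1)[OF i] .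
        show "(B ! prv n i, u ! prv n i) \<in> \<Delta>" using D by simp
        show "(B ! prv n i, u ! prv n i) \<in> C ! i" using m0[OF i] .
        show "B ! i \<in> fst ` \<Delta>" using D by force
        show "B ! i \<in> fst ` (C ! i)" using m1(1)[OF i] by force
        show "B ! i \<noteq> B ! prv n i" using d0 by simp
      qed
    qed
    thus "chain_of n (B, u) ! i = C ! i" using chain_of_nth[OF i] by simp
  qed
  thus ?thesis using G by blast
qed

lemma fst_rev: "fst ` reverse_orientation \<Gamma> = fst ` \<Gamma>"
  unfolding reverse_orientation_def by (force simp: image_image)

lemma tangent_neg: "tangent_at S p (- v) \<Longrightarrow> tangent_at S p v"
proof -
  assume "tangent_at S p (- v)"
  then obtain \<Gamma> where "p \<in> S" "\<Gamma> \<in> oriented_circles" "fst ` \<Gamma> = S" "(p, - v) \<in> \<Gamma>"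
    unfolding tangent_at_def by blast
  hence "reverse_orientation \<Gamma> \<in> oriented_circles" "fst ` reverse_orientation \<Gamma> = S" "(p, v) \<in> reverse_orientation \<Gamma>"
    using OC_rev fst_rev rev_mem by auto
  thus ?thesis unfolding tangent_at_def using \<open>p \<in> S\<close> by blast
qed

lemma GF_neg:
  assumes G: "(B, u) \<in> generic_framed n"
  shows "(B, map uminus u) \<in> generic_framed n"
proof -
  have F: "(B, u) \<in> framed n" using GF_framed[OF G] .
  have lu: "length u = n" using framed_len[OF F] by simp
  have F': "(B, map uminus u) \<in> framed n"
    unfolding framed_def
  proof (intro CollectI case_prodI conjI allI impI)
    show "length B = n" "length (map uminus u) = n" using framed_len[OF F] by auto
    fix i assume i: "i < n"
    have n: "0 < n" using i by simp
    have mi: "map uminus u ! i = - (u ! i)" "map uminus u ! nxt n i = - (u ! nxt n i)"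
      using i nxt_lt[OF n] lu by auto
    note f = framedD[OF F i]
    show "B ! i \<noteq> B ! nxt n i" using f(1) .
    show "cmod (map uminus u ! i) = 1" using f(2) mi by simp
    have "(- (u ! nxt n i)) * cnj (B ! nxt n i - B ! i) = (B ! nxt n i - B ! i) * cnj (- (u ! i))"
      using f(4) by simp
    thus "ccw_angle (map uminus u ! i) (B ! nxt n i - B ! i) = ccw_angle (B ! nxt n i - B ! i) (map uminus u ! nxt n i)"
      unfolding mi using angle_iff[of "- (u ! i)" "- (u ! nxt n i)" "B ! nxt n i - B ! i"] f by simp
  qed
  show ?thesis
    unfolding generic_framed_def
  proof (intro CollectI case_prodI conjI F' notI)
    assume "\<exists>i<n. \<exists>S\<in>gcircles. tangent_at S (B ! prv n i) (map uminus u ! prv n i) \<and> tangent_at S (B ! i) (map uminus u ! i) \<and>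
          tangent_at S (B ! nxt n i) (map uminus u ! nxt n i)"
    then obtain i S where i: "i < n" and S: "S \<in> gcircles" "tangent_at S (B ! prv n i) (map uminus u ! prv n i)"
       "tangent_at S (B ! i) (map uminus u ! i)" "tangent_at S (B ! nxt n i) (map uminus u ! nxt n i)" by blast
    have n: "0 < n" using i by simp
    have "map uminus u ! prv n i = - (u ! prv n i)" "map uminus u ! i = - (u ! i)" "map uminus u ! nxt n i = - (u ! nxt n i)"
      using i nxt_lt[OF n] prv_lt[OF n] lu by auto
    hence "tangent_at S (B ! prv n i) (u ! prv n i)" "tangent_at S (B ! i) (u ! i)" "tangent_at S (B ! nxt n i) (u ! nxt n i)"
      using S tangent_neg by auto
    thus False using G i S(1) unfolding generic_framed_def by blast
  qed
qed

lemma chain_map_eq: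
  assumes p: "p \<in> generic_framed n"
  shows "chain_map n (frame_rel n `` {p}) = chain_rel n `` {chain_of n p}"
proof -
  have "p \<in> frame_rel n `` {p}" using equiv_class_self[OF equiv_FR p] .
  hence "(SOME x. x \<in> frame_rel n `` {p}) \<in> frame_rel n `` {p}" by (rule someI)
  hence "(p, SOME x. x \<in> frame_rel n `` {p}) \<in> frame_rel n" by simp
  hence "(chain_of n p, chain_of n (SOME x. x \<in> frame_rel n `` {p})) \<in> chain_rel n" by (rule frame_rel_chain)
  hence "chain_rel n `` {chain_of n p} = chain_rel n `` {chain_of n (SOME x. x \<in> frame_rel n `` {p})}"
    by (rule equiv_class_eq[OF equiv_CR])
  thus ?thesis unfolding chain_map_def by simp
qed

theorem proposition2p9:
  fixes n :: nat
  assumes "n \<ge> 3"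
  shows "(\<forall>(B, u) \<in> generic_framed n. \<forall>i<n.
            (\<exists>!S. S \<in> gcircles \<and> tangent_at S (B ! prv n i) (u ! prv n i) \<and> tangent_at S (B ! i) (u ! i)) \<and>
            (\<exists>!\<Gamma>. \<Gamma> \<in> oriented_circles \<and> (B ! prv n i, u ! prv n i) \<in> \<Gamma> \<and> (B ! i, u ! i) \<in> \<Gamma>))
       \<and> (\<forall>p \<in> generic_framed n. chain_of n p \<in> generic_chains n)
       \<and> (\<forall>(p, q) \<in> frame_rel n. (chain_of n p, chain_of n q) \<in> chain_rel n)
       \<and> bij_betw (chain_map n) (generic_framed n // frame_rel n) (generic_chains n // chain_rel n)"
proof (intro conjI)
  show "\<forall>(B, u) \<in> generic_framed n. \<forall>i<n.
            (\<exists>!S. S \<in> gcircles \<and> tangent_at S (B ! prv n i) (u ! prv n i) \<and> tangent_at S (B ! i) (u ! i)) \<and>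
            (\<exists>!\<Gamma>. \<Gamma> \<in> oriented_circles \<and> (B ! prv n i, u ! prv n i) \<in> \<Gamma> \<and> (B ! i, u ! i) \<in> \<Gamma>)"
  proof (clarify)
    fix B u i assume G: "(B, u) \<in> generic_framed n" and i: "i < n"
    show "(\<exists>!S. S \<in> gcircles \<and> tangent_at S (B ! prv n i) (u ! prv n i) \<and> tangent_at S (B ! i) (u ! i)) \<and>
            (\<exists>!\<Gamma>. \<Gamma> \<in> oriented_circles \<and> (B ! prv n i, u ! prv n i) \<in> \<Gamma> \<and> (B ! i, u ! i) \<in> \<Gamma>)"
      using framed_ex1(2)[OF GF_framed[OF G] i] framed_ex1(1)[OF GF_framed[OF G] i] by (rule conjI)
  qed
  show "\<forall>p \<in> generic_framed n. chain_of n p \<in> generic_chains n"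
    using chain_of_generic by force
  show "\<forall>(p, q) \<in> frame_rel n. (chain_of n p, chain_of n q) \<in> chain_rel n"
    using frame_rel_chain by blast
  show "bij_betw (chain_map n) (generic_framed n // frame_rel n) (generic_chains n // chain_rel n)"
    unfolding bij_betw_def
  proof (intro conjI)
    show "inj_on (chain_map n) (generic_framed n // frame_rel n)"
    proof (rule inj_onI)
      fix X Y assume X: "X \<in> generic_framed n // frame_rel n" and Y: "Y \<in> generic_framed n // frame_rel n"
        and XY: "chain_map n X = chain_map n Y"
      obtain p where p: "X = frame_rel n `` {p}" "p \<in> generic_framed n" using X by (rule quotientE)
      obtain q where q: "Y = frame_rel n `` {q}" "q \<in> generic_framed n" using Y by (rule quotientE)
      have gp: "chain_of n p \<in> generic_chains n" and gq: "chain_of n q \<in> generic_chains n"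
        using chain_of_generic p(2) q(2) by (cases p, cases q, force)+
      have "chain_rel n `` {chain_of n p} = chain_rel n `` {chain_of n q}"
        using XY chain_map_eq p q by simp
      hence "(chain_of n p, chain_of n q) \<in> chain_rel n" using eq_equiv_class_iff[OF equiv_CR gp gq] by simp
      hence "chain_of n q = chain_of n p \<or> chain_of n q = map reverse_orientation (chain_of n p)"
        unfolding chain_rel_def by simp
      moreover obtain B u where pe: "p = (B, u)" by (cases p)
      ultimately have "chain_of n q = chain_of n p \<or> chain_of n q = chain_of n (B, map uminus u)"
        using chain_of_neg GF_framed p(2) by auto
      hence "q = p \<or> q = (B, map uminus u)"
        using chain_of_inj[OF q(2) p(2)] chain_of_inj[OF q(2) GF_neg[OF p(2)[unfolded pe]]] by blast
      hence "(p, q) \<in> frame_rel n" unfolding frame_rel_def using p(2) q(2) pe by auto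
      thus "X = Y" using p q equiv_class_eq[OF equiv_FR] by simp
    qed
    show "chain_map n ` (generic_framed n // frame_rel n) = generic_chains n // chain_rel n"
    proof
      show "chain_map n ` (generic_framed n // frame_rel n) \<subseteq> generic_chains n // chain_rel n"
      proof
        fix Z assume "Z \<in> chain_map n ` (generic_framed n // frame_rel n)"
        then obtain X where X: "X \<in> generic_framed n // frame_rel n" and Z: "Z = chain_map n X" by blast
        obtain p where p: "X = frame_rel n `` {p}" "p \<in> generic_framed n" using X by (rule quotientE)
        have "chain_of n p \<in> generic_chains n" using chain_of_generic p(2) by (cases p) force
        thus "Z \<in> generic_chains n // chain_rel n" using Z p chain_map_eq by (simp add: quotientI)
      qed
      show "generic_chains n // chain_rel n \<subseteq> chain_map n ` (generic_framed n // frame_rel n)"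
      proof
        fix Z assume "Z \<in> generic_chains n // chain_rel n"
        then obtain C where C: "Z = chain_rel n `` {C}" "C \<in> generic_chains n" by (rule quotientE)
        obtain p where p: "p \<in> generic_framed n" "chain_of n p = C" using chain_surj[OF C(2)] by blast
        have "Z = chain_map n (frame_rel n `` {p})" using chain_map_eq[OF p(1)] p(2) C(1) by simp
        moreover have "frame_rel n `` {p} \<in> generic_framed n // frame_rel n" using p(1) by (rule quotientI)
        ultimately show "Z \<in> chain_map n ` (generic_framed n // frame_rel n)" by blast
      qed
    qed
  qed
qed

end
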